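(* Let $K$ be an oriented virtual knot diagram. Let $m(K)$ be the diagram obtained from $K$ by switching all real crossings, and let $r(K)$ be $K$ with its orientation reversed. Then $$F_{m(K)}(t,s)=-F_K(t^{-1},s^{-1})\quad\text{and}\quad F_{r(K)}(t,s)=F_K(t^{-1},s).$$ Here $F_K(t^{-1},s^{-1})$ denotes the element obtained from $F_K(t,s)$ by replacing each basis element $t^{[p(s)]}$ by $t^{[-p(s^{-1})]}$. Likewise $F_K(t^{-1},s)$ is obtained by replacing $t^{[p(s)]}$ by $t^{[-p(s)]}$.
   Context: The Gauss diagram $G(K)$ of an oriented virtual knot diagram $K$ is built as follows. Take a counterclockwise-oriented circle. For each real crossing, join its two preimages by a chord directed from over- to undercrossing, labeled with the writhe $w(c)=\pm1$. Put $w(K)=\sum_c w(c)$. Let $d$ be a chord intersecting a chord $c$ (endpoints interleave). We say $d$ crosses $c$ from left to right if, viewing $c$ along its direction, the tail of $d$ lies on the left and its head on the right; right to left is the opposite. Let $r_1,\dots,r_n$ be the chords crossing $c$ from left to right and $l_1,\dots,l_m$ those crossing from right to left. Then $\mathrm{Ind}(c)=\sum_i w(r_i)-\sum_j w(l_j)$. Put $N=|\mathrm{Ind}(c)|$ and let $\phi$ be reduction mod $N$ into $\{0,\dots,N-1\}$ if $N\ge1$, and the identity if $N=0$. Define $$g_c(s)=\sum_i w(r_i)s^{\phi(\mathrm{Ind}(r_i))}-\sum_j w(l_j)s^{\phi(-\mathrm{Ind}(l_j))}.$$ Call Laurent polynomials $p,q\in\mathbb{Z}[s,s^{-1}]$ equivalent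 if $p(1)=q(1)$ and $p\equiv q\pmod{s^{|p(1)|}-1}$. Write $t^{[p]}$ for the corresponding basis element of the free abelian group on equivalence classes. Then $$F_K(t,s)=\sum_c w(c)\,t^{[g_c(s)]}-w(K)\,t^{[0]},$$ summing over all real crossings. *)

theory Defs
  imports Main "HOL-Library.Poly_Mapping"
begin

text \<open>A Gauss diagram is a finite set of chords (t, h, e): t is the tail
 (preimage of the overcrossing), h the head (preimage of the undercrossing),
 e = w(c) the writhe.  Endpoints are integers; the (counterclockwise)
 orientation of the circle is the cyclic order of the integers.\<close>

type_synonym chord = "int \<times> int \<times> int"

definition ctail :: "chord \<Rightarrow> int" where "ctail c = fst c"
definition chead :: "chord \<Rightarrow> int" where "chead c = fst (snd c)"
definition cw :: "chord \<Rightarrow> int" where "cw c = snd (snd c)"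

definition gauss_wf :: "chord set \<Rightarrow> bool" where
  "gauss_wf G \<longleftrightarrow> finite G \<and>
     (\<forall>c\<in>G. ctail c \<noteq> chead c \<and> cw c \<in> {1, -1}) \<and>
     (\<forall>c\<in>G. \<forall>d\<in>G. c \<noteq> d \<longrightarrow> {ctail c, chead c} \<inter> {ctail d, chead d} = {})"

definition ccw_between :: "int \<Rightarrow> int \<Rightarrow> int \<Rightarrow> bool" where
  "ccw_between a p b \<longleftrightarrow> (if a < b then a < p \<and> p < b else (a < p \<or> p < b))"

text \<open>Viewing c along its direction (tail to head) on a counterclockwise circle,
 the right side is the ccw arc from tail to head, the left side the ccw arc
 from head to tail.\<close>
definition right_of :: "chord \<Rightarrow> int \<Rightarrow> bool" where
  "right_of c p \<longleftrightarrow> ccw_between (ctail c) p (chead c)"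
definition left_of :: "chord \<Rightarrow> int \<Rightarrow> bool" where
  "left_of c p \<longleftrightarrow> ccw_between (chead c) p (ctail c)"

definition crosses_lr :: "chord \<Rightarrow> chord \<Rightarrow> bool" where
  "crosses_lr d c \<longleftrightarrow> left_of c (ctail d) \<and> right_of c (chead d)"
definition crosses_rl :: "chord \<Rightarrow> chord \<Rightarrow> bool" where
  "crosses_rl d c \<longleftrightarrow> right_of c (ctail d) \<and> left_of c (chead d)"

definition writhe :: "chord set \<Rightarrow> int" where
  "writhe G = (\<Sum>c\<in>G. cw c)"

definition Ind :: "chord set \<Rightarrow> chord \<Rightarrow> int" where
  "Ind G c = (\<Sum>d\<in>{d\<in>G. crosses_lr d c}. cw d) - (\<Sum>d\<in>{d\<in>G. crosses_rl d c}. cw d)"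

section \<open>Laurent polynomials Z[s,s^-1] as the group ring Z[Z]\<close>

type_synonym lpoly = "int \<Rightarrow>\<^sub>0 int"

definition lmon :: "int \<Rightarrow> int \<Rightarrow> lpoly" where "lmon k a = Poly_Mapping.single k a"

definition leval1 :: "lpoly \<Rightarrow> int" where
  "leval1 p = (\<Sum>k\<in>Poly_Mapping.keys p. Poly_Mapping.lookup p k)"

definition linv :: "lpoly \<Rightarrow> lpoly" where
  "linv p = (\<Sum>k\<in>Poly_Mapping.keys p. lmon (-k) (Poly_Mapping.lookup p k))"

definition lequiv :: "lpoly \<Rightarrow> lpoly \<Rightarrow> bool" where
  "lequiv p q \<longleftrightarrow> leval1 p = leval1 q \<and> (lmon \<bar>leval1 p\<bar> 1 - 1) dvd (p - q)"

definition lclass :: "lpoly \<Rightarrow> lpoly set" where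
  "lclass p = {q. lequiv p q}"

definition phi :: "int \<Rightarrow> int \<Rightarrow> int" where
  "phi N k = (if N \<ge> 1 then k mod N else k)"

definition gpoly :: "chord set \<Rightarrow> chord \<Rightarrow> lpoly" where
  "gpoly G c = (let N = \<bar>Ind G c\<bar> in
     (\<Sum>d\<in>{d\<in>G. crosses_lr d c}. lmon (phi N (Ind G d)) (cw d))
   - (\<Sum>d\<in>{d\<in>G. crosses_rl d c}. lmon (phi N (- Ind G d)) (cw d)))"

text \<open>Elements of the free abelian group on equivalence classes: finitely
 supported integer functions on classes; t^[p] is single (lclass p) 1.\<close>
definition Finv :: "chord set \<Rightarrow> (lpoly set \<Rightarrow>\<^sub>0 int)" where
  "Finv G = (\<Sum>c\<in>G. Poly_Mapping.single (lclass (gpoly G c)) (cw c))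
            - Poly_Mapping.single (lclass 0) (writhe G)"

text \<open>Linear substitution replacing each basis element t^[p] by t^[f p]
 (p any representative of the class).\<close>
definition tsubst :: "(lpoly \<Rightarrow> lpoly) \<Rightarrow> (lpoly set \<Rightarrow>\<^sub>0 int) \<Rightarrow> (lpoly set \<Rightarrow>\<^sub>0 int)" where
  "tsubst f x = (\<Sum>X\<in>Poly_Mapping.keys x. Poly_Mapping.single (lclass (f (SOME p. p \<in> X))) (Poly_Mapping.lookup x X))"

text \<open>Switching all real crossings: every chord reverses direction and its sign flips.\<close>
definition mirror :: "chord set \<Rightarrow> chord set" where
  "mirror G = (\<lambda>(t, h, e). (h, t, - e)) ` G"

text \<open>Reversing the orientation: the circle is traversed backwards (reflection
 of the endpoints); over/under information and crossing signs are unchanged.\<close>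
definition reverse :: "chord set \<Rightarrow> chord set" where
  "reverse G = (\<lambda>(t, h, e). (- t, - h, e)) ` G"

end

theory Submission imports Defs begin

definition lin :: "('k \<Rightarrow> 'b::comm_monoid_add \<Rightarrow> 'c::comm_monoid_add) \<Rightarrow> ('k \<Rightarrow>\<^sub>0 'b) \<Rightarrow> 'c" where
  "lin h x = (\<Sum>k\<in>Poly_Mapping.keys x. h k (Poly_Mapping.lookup x k))"

locale addh =
  fixes h :: "'k \<Rightarrow> 'b::comm_monoid_add \<Rightarrow> 'c::comm_monoid_add"
  assumes h0: "h k 0 = 0" and hadd: "h k (a + b) = h k a + h k b"
begin

lemma lin_super: "finite S \<Longrightarrow> Poly_Mapping.keys x \<subseteq> S \<Longrightarrow>
  lin h x = (\<Sum>k\<in>S. h k (Poly_Mapping.lookup x k))"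
  unfolding lin_def
  by (rule sum.mono_neutral_left) (auto simp: in_keys_iff h0)

lemma lin_add: "lin h (x + y) = lin h x + lin h y"
proof -
  let ?S = "Poly_Mapping.keys x \<union> Poly_Mapping.keys y \<union> Poly_Mapping.keys (x+y)"
  have f: "finite ?S" by simp
  have "lin h (x + y) = (\<Sum>k\<in>?S. h k (Poly_Mapping.lookup (x+y) k))"
    by (rule lin_super[OF f]) auto
  also have "\<dots> = (\<Sum>k\<in>?S. h k (Poly_Mapping.lookup x k)) + (\<Sum>k\<in>?S. h k (Poly_Mapping.lookup y k))"
    by (simp add: lookup_add hadd sum.distrib)
  also have "\<dots> = lin h x + lin h y"
  proof -
    have a: "Poly_Mapping.keys x \<subseteq> ?S" "Poly_Mapping.keys y \<subseteq> ?S" by blast+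
    show ?thesis by (simp only: lin_super[OF f a(1)] lin_super[OF f a(2)])
  qed
  finally show ?thesis .
qed

lemma lin_zero: "lin h 0 = 0" by (simp add: lin_def)

lemma lin_single: "lin h (Poly_Mapping.single k a) = h k a"
  by (cases "a = 0") (simp_all add: lin_def h0)

lemma lin_sum: "lin h (\<Sum>i\<in>A. f i) = (\<Sum>i\<in>A. lin h (f i))"
  by (induction A rule: infinite_finite_induct) (simp_all add: lin_zero lin_add)

end

lemma lin_diff:
  fixes h :: "'k \<Rightarrow> 'b::ab_group_add \<Rightarrow> 'c::ab_group_add"
  assumes "addh h"
  shows "lin h (x - y) = lin h x - lin h y"
proof -
  have "lin h x = lin h ((x - y) + y)" by simp
  also have "\<dots> = lin h (x - y) + lin h y" by (rule addh.lin_add[OF assms])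
  finally show ?thesis by simp
qed

lemma lin_uminus:
  fixes h :: "'k \<Rightarrow> 'b::ab_group_add \<Rightarrow> 'c::ab_group_add"
  assumes "addh h"
  shows "lin h (- x) = - lin h x"
  using lin_diff[OF assms, of 0 x] by (simp add: addh.lin_zero[OF assms])

lemma pm_decomp: "x = (\<Sum>k\<in>Poly_Mapping.keys x. Poly_Mapping.single k (Poly_Mapping.lookup x k))"
proof (rule poly_mapping_eqI)
  fix i
  show "Poly_Mapping.lookup x i = Poly_Mapping.lookup (\<Sum>k\<in>Poly_Mapping.keys x. Poly_Mapping.single k (Poly_Mapping.lookup x k)) i"
    by (cases "i \<in> Poly_Mapping.keys x")
       (auto simp: lookup_sum lookup_single when_def in_keys_iff sum.delta)
qed


lemma addh_single: "addh (\<lambda>k a. Poly_Mapping.single (f k) a)"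
  by unfold_locales (simp_all add: single_add)

lemma addh_id: "addh (\<lambda>k (a::'a::comm_monoid_add). a)"
  by unfold_locales simp_all

lemma linv_lin: "linv p = lin (\<lambda>k a. Poly_Mapping.single (-k) a) p"
  by (simp add: linv_def lin_def lmon_def)

lemma leval1_lin: "leval1 p = lin (\<lambda>k a. a) p"
  by (simp add: leval1_def lin_def)

lemma tsubst_lin: "tsubst f x = lin (\<lambda>X a. Poly_Mapping.single (lclass (f (SOME p. p \<in> X))) a) x"
  by (simp add: tsubst_def lin_def)

lemma linv_add: "linv (p + q) = linv p + linv q"
  unfolding linv_lin by (rule addh.lin_add[OF addh_single])
lemma linv_diff: "linv (p - q) = linv p - linv q"
  unfolding linv_lin by (rule lin_diff[OF addh_single])
lemma linv_uminus: "linv (- p) = - linv p"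
  unfolding linv_lin by (rule lin_uminus[OF addh_single])
lemma linv_sum: "linv (\<Sum>i\<in>A. f i) = (\<Sum>i\<in>A. linv (f i))"
  unfolding linv_lin by (rule addh.lin_sum[OF addh_single])
lemma linv_single: "linv (lmon k a) = lmon (-k) a"
  by (simp add: linv_lin lmon_def addh.lin_single[OF addh_single])

lemma leval1_add: "leval1 (p + q) = leval1 p + leval1 q"
  unfolding leval1_lin by (rule addh.lin_add[OF addh_id])
lemma leval1_diff: "leval1 (p - q) = leval1 p - leval1 q"
  unfolding leval1_lin by (rule lin_diff[OF addh_id])
lemma leval1_uminus: "leval1 (- p) = - leval1 p"
  unfolding leval1_lin by (rule lin_uminus[OF addh_id])
lemma leval1_sum: "leval1 (\<Sum>i\<in>A. f i) = (\<Sum>i\<in>A. leval1 (f i))"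
  unfolding leval1_lin by (rule addh.lin_sum[OF addh_id])
lemma leval1_single: "leval1 (lmon k a) = a"
  by (simp add: leval1_lin lmon_def addh.lin_single[OF addh_id])

lemma leval1_linv: "leval1 (linv p) = leval1 p"
proof -
  have "leval1 (linv p) = (\<Sum>k\<in>Poly_Mapping.keys p. leval1 (lmon (-k) (Poly_Mapping.lookup p k)))"
    by (simp only: linv_def leval1_sum)
  moreover have "(\<Sum>k\<in>Poly_Mapping.keys p. leval1 (lmon (-k) (Poly_Mapping.lookup p k))) = (\<Sum>k\<in>Poly_Mapping.keys p. Poly_Mapping.lookup p k)"
    by (simp only: leval1_single)
  ultimately show ?thesis by (simp only: leval1_def)
qed

lemma linv_mult: "linv (x * y) = linv x * linv y"
proof -
  have "x * y = (\<Sum>k\<in>Poly_Mapping.keys x. \<Sum>l\<in>Poly_Mapping.keys y.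
      lmon (k + l) (Poly_Mapping.lookup x k * Poly_Mapping.lookup y l))"
    apply (subst pm_decomp[of x], subst pm_decomp[of y])
    by (simp add: sum_product mult_single lmon_def)
  then have "linv (x * y) = (\<Sum>k\<in>Poly_Mapping.keys x. \<Sum>l\<in>Poly_Mapping.keys y.
      lmon (-k) (Poly_Mapping.lookup x k) * lmon (-l) (Poly_Mapping.lookup y l))"
    by (simp add: linv_sum linv_single) (simp add: lmon_def mult_single algebra_simps)
  also have "\<dots> = linv x * linv y"
    by (simp add: linv_def sum_product)
  finally show ?thesis .
qed

lemma lmon_pow: "lmon N 1 ^ n = lmon (int n * N) 1"
  by (induction n) (simp_all add: lmon_def mult_single algebra_simps)

lemma dvd_lmon_mult: "(lmon N 1 - 1) dvd (lmon (k * N) 1 - 1)"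
proof (cases "k \<ge> 0")
  case True
  then obtain n where k: "k = int n" using nonneg_int_cases by blast
  show ?thesis unfolding k lmon_pow[symmetric] power_diff_1_eq by simp
next
  case False
  then obtain n where k: "k = - int n" by (metis nonpos_int_cases linorder_linear)
  have "lmon (k * N) 1 - 1 = - lmon (k*N) 1 * (lmon (int n * N) 1 - 1)"
    by (simp add: k lmon_def mult_single algebra_simps)
  moreover have "(lmon N 1 - 1) dvd (lmon (int n * N) 1 - 1)"
    unfolding lmon_pow[symmetric] power_diff_1_eq by simp
  ultimately show ?thesis by simp
qed

lemma dvd_lmon: assumes "N dvd (a - b)"
  shows "(lmon N 1 - 1) dvd (lmon a w - lmon b w)"
proof -
  obtain k where k: "a - b = N * k" using assms by blast
  have "lmon a w - lmon b w = lmon b w * (lmon (k * N) 1 - 1)"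
    using k by (simp add: lmon_def mult_single algebra_simps)
  then show ?thesis using dvd_lmon_mult[of N k] by simp
qed

lemma lequiv_refl: "lequiv p p" by (simp add: lequiv_def)

lemma lequiv_sym: "lequiv p q \<Longrightarrow> lequiv q p"
  unfolding lequiv_def
  by (metis dvd_minus_iff minus_diff_eq)

lemma lequiv_trans: "lequiv p q \<Longrightarrow> lequiv q r \<Longrightarrow> lequiv p r"
proof -
  assume a: "lequiv p q" "lequiv q r"
  have "p - r = (p - q) + (q - r)" by simp
  then show ?thesis using a unfolding lequiv_def by (metis dvd_add)
qed

lemma lclass_eq: "lequiv p q \<Longrightarrow> lclass p = lclass q"
  unfolding lclass_def using lequiv_sym lequiv_trans by blast

lemma tsubst_single:
  assumes resp: "\<And>p q. lequiv p q \<Longrightarrow> lequiv (f p) (f q)"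
  shows "tsubst f (Poly_Mapping.single (lclass p) a) = Poly_Mapping.single (lclass (f p)) a"
proof -
  have "p \<in> lclass p" by (simp add: lclass_def lequiv_refl)
  then have "(SOME q. q \<in> lclass p) \<in> lclass p" by (rule someI)
  then have "lequiv p (SOME q. q \<in> lclass p)" by (simp add: lclass_def)
  then have "lclass (f (SOME q. q \<in> lclass p)) = lclass (f p)"
    using resp lclass_eq lequiv_sym by metis
  then show ?thesis
    by (simp add: tsubst_lin addh.lin_single[OF addh_single])
qed

lemma tsubst_diff: "tsubst f (x - y) = tsubst f x - tsubst f y"
  unfolding tsubst_lin by (rule lin_diff[OF addh_single])
lemma tsubst_uminus: "tsubst f (- x) = - tsubst f x"
  unfolding tsubst_lin by (rule lin_uminus[OF addh_single])
lemma tsubst_sum: "tsubst f (\<Sum>i\<in>A. g i) = (\<Sum>i\<in>A. tsubst f (g i))"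
  unfolding tsubst_lin by (rule addh.lin_sum[OF addh_single])

lemma resp_uminus: "lequiv p q \<Longrightarrow> lequiv (- p) (- q)"
proof -
  assume a: "lequiv p q"
  have "(- p) - (- q) = - (p - q)" by simp
  then show ?thesis using a unfolding lequiv_def leval1_uminus by (metis abs_minus dvd_minus_iff)
qed

lemma resp_linv: assumes "lequiv p q" shows "lequiv (- linv p) (- linv q)"
proof -
  let ?n = "\<bar>leval1 p\<bar>"
  have e: "leval1 p = leval1 q" and d: "(lmon ?n 1 - 1) dvd (p - q)"
    using assms by (auto simp: lequiv_def)
  obtain r where r: "p - q = (lmon ?n 1 - 1) * r" using d by blast
  have "linv (p - q) = linv p - linv q" by (rule linv_diff)
  then have "- linv p - - linv q = - linv (p - q)" by simp
  also have "\<dots> = - (linv (lmon ?n 1 - 1) * linv r)" by (simp add: r linv_mult)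
  also have "linv (lmon ?n 1 - 1) = lmon (- ?n) 1 - lmon 0 1"
  proof -
    have o: "(1::lpoly) = lmon 0 1" by (simp add: lmon_def)
    show ?thesis unfolding o linv_diff linv_single by simp
  qed
  finally have eq: "- linv p - - linv q = - ((lmon (- ?n) 1 - lmon 0 1) * linv r)" .
  have "(lmon ?n 1 - 1) dvd (lmon (- ?n) 1 - lmon 0 1)"
    by (rule dvd_lmon) simp
  then have "(lmon ?n 1 - 1) dvd (- linv p - - linv q)"
    unfolding eq by simp
  then show ?thesis
    by (simp add: lequiv_def leval1_uminus leval1_linv e)
qed


definition mf :: "chord \<Rightarrow> chord" where "mf = (\<lambda>(t, h, e). (h, t, - e))"
definition rf :: "chord \<Rightarrow> chord" where "rf = (\<lambda>(t, h, e). (- t, - h, e))"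

lemma mf_simps[simp]: "ctail (mf c) = chead c" "chead (mf c) = ctail c" "cw (mf c) = - cw c"
  by (cases c; simp add: mf_def ctail_def chead_def cw_def)+
lemma rf_simps[simp]: "ctail (rf c) = - ctail c" "chead (rf c) = - chead c" "cw (rf c) = cw c"
  by (cases c; simp add: rf_def ctail_def chead_def cw_def)+

lemma inj_mf: "inj mf" by (auto simp: inj_def mf_def)
lemma inj_rf: "inj rf" by (auto simp: inj_def rf_def)

lemma mirror_mf: "mirror G = mf ` G" by (simp add: mirror_def mf_def)
lemma reverse_rf: "reverse G = rf ` G" by (simp add: reverse_def rf_def)

lemma ccw_neg: "ccw_between (- a) (- p) (- b) = ccw_between b p a"
  by (auto simp: ccw_between_def)

lemma mf_lr[simp]: "crosses_lr (mf d) (mf c) = crosses_lr d c"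
  by (auto simp: crosses_lr_def left_of_def right_of_def)
lemma mf_rl[simp]: "crosses_rl (mf d) (mf c) = crosses_rl d c"
  by (auto simp: crosses_rl_def left_of_def right_of_def)
lemma rf_lr[simp]: "crosses_lr (rf d) (rf c) = crosses_rl d c"
  by (auto simp: crosses_rl_def crosses_lr_def left_of_def right_of_def ccw_neg)
lemma rf_rl[simp]: "crosses_rl (rf d) (rf c) = crosses_lr d c"
  by (auto simp: crosses_rl_def crosses_lr_def left_of_def right_of_def ccw_neg)

lemma sum_img_filter:
  assumes "inj g"
  shows "(\<Sum>d\<in>{d\<in>g ` G. P d}. f d) = (\<Sum>d\<in>{d\<in>G. P (g d)}. f (g d))"
proof -
  have "{d\<in>g ` G. P d} = g ` {d\<in>G. P (g d)}" by auto
  moreover have "inj_on g {d\<in>G. P (g d)}" using assms by (simp add: inj_on_def inj_def)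
  ultimately show ?thesis by (simp add: sum.reindex)
qed

lemma Ind_mirror: "Ind (mirror G) (mf c) = - Ind G c"
  by (simp add: Ind_def mirror_mf sum_img_filter[OF inj_mf] sum_negf)

lemma Ind_reverse: "Ind (reverse G) (rf c) = - Ind G c"
  by (simp add: Ind_def reverse_rf sum_img_filter[OF inj_rf])

lemma leval1_gpoly: "leval1 (gpoly G c) = Ind G c"
  by (simp add: gpoly_def Let_def leval1_diff leval1_sum leval1_single Ind_def)

lemma gpoly_reverse: "gpoly (reverse G) (rf c) = - gpoly G c"
proof -
  have "gpoly (reverse G) (rf c) = (let N = \<bar>Ind G c\<bar> in
     (\<Sum>d\<in>{d\<in>G. crosses_rl d c}. lmon (phi N (- Ind G d)) (cw d))
   - (\<Sum>d\<in>{d\<in>G. crosses_lr d c}. lmon (phi N (Ind G d)) (cw d)))"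
    unfolding gpoly_def Ind_reverse
    by (simp add: reverse_rf sum_img_filter[OF inj_rf] Ind_reverse[unfolded reverse_rf])
  then show ?thesis by (simp add: gpoly_def Let_def)
qed

lemma phi_neg: "N \<ge> 0 \<Longrightarrow> N dvd (phi N (- x) - - phi N x)"
proof (cases "N \<ge> 1")
  case True
  have "((- x) mod N + x mod N) mod N = ((- x) + x) mod N"
    by (rule mod_add_eq)
  then have "((- x) mod N + x mod N) mod N = 0" by simp
  then show ?thesis using True by (simp add: phi_def mod_eq_0_iff_dvd)
next
  case False
  then show ?thesis by (simp add: phi_def)
qed

lemma diff4: "(a::'a::ab_group_add) - b - (c - d) = (a - c) - (b - d)" by simp

lemma gpoly_mirror: "lequiv (gpoly (mirror G) (mf c)) (- linv (gpoly G c))"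
proof -
  define N where "N = \<bar>Ind G c\<bar>"
  define A where "A = {d\<in>G. crosses_lr d c}"
  define B where "B = {d\<in>G. crosses_rl d c}"
  have gm: "gpoly (mirror G) (mf c) =
     (\<Sum>d\<in>A. lmon (phi N (- Ind G d)) (- cw d)) - (\<Sum>d\<in>B. lmon (phi N (Ind G d)) (- cw d))"
    unfolding gpoly_def Ind_mirror
    by (simp add: Let_def mirror_mf sum_img_filter[OF inj_mf] Ind_mirror[unfolded mirror_mf] N_def A_def B_def)
  have lg: "- linv (gpoly G c) =
     (\<Sum>d\<in>A. lmon (- phi N (Ind G d)) (- cw d)) - (\<Sum>d\<in>B. lmon (- phi N (- Ind G d)) (- cw d))"
    unfolding gpoly_def Let_def
    by (simp add: linv_diff linv_sum linv_single N_def A_def B_def) (simp add: lmon_def single_uminus sum_negf)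
  have diff: "gpoly (mirror G) (mf c) - - linv (gpoly G c) =
     (\<Sum>d\<in>A. lmon (phi N (- Ind G d)) (- cw d) - lmon (- phi N (Ind G d)) (- cw d))
   - (\<Sum>d\<in>B. lmon (phi N (Ind G d)) (- cw d) - lmon (- phi N (- Ind G d)) (- cw d))"
    unfolding gm lg sum_subtractf by (rule diff4)
  have N0: "N \<ge> 0" by (simp add: N_def)
  have dA: "(lmon N 1 - 1) dvd (\<Sum>d\<in>A. lmon (phi N (- Ind G d)) (- cw d) - lmon (- phi N (Ind G d)) (- cw d))"
    by (rule dvd_sum, rule dvd_lmon, rule phi_neg[OF N0])
  have dB: "(lmon N 1 - 1) dvd (\<Sum>d\<in>B. lmon (phi N (Ind G d)) (- cw d) - lmon (- phi N (- Ind G d)) (- cw d))"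
  proof (rule dvd_sum)
    fix d
    have "N dvd (phi N (Ind G d) - - phi N (- Ind G d))"
      using phi_neg[OF N0, of "- Ind G d"] by (simp only: minus_minus)
    then show "(lmon N 1 - 1) dvd (lmon (phi N (Ind G d)) (- cw d) - lmon (- phi N (- Ind G d)) (- cw d))"
      by (rule dvd_lmon)
  qed
  have ev: "leval1 (gpoly (mirror G) (mf c)) = - Ind G c"
    by (simp add: leval1_gpoly Ind_mirror)
  have ev2: "leval1 (- linv (gpoly G c)) = - Ind G c"
    by (simp only: leval1_uminus leval1_linv leval1_gpoly)
  have dd: "(lmon N 1 - 1) dvd (gpoly (mirror G) (mf c) - - linv (gpoly G c))"
    unfolding diff using dA dB by (rule dvd_diff)
  have ab: "\<bar>leval1 (gpoly (mirror G) (mf c))\<bar> = N" unfolding ev N_def by simp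
  show ?thesis
    unfolding lequiv_def ab using dd ev ev2 by (simp only: simp_thms)
qed


lemma linv_zero: "linv 0 = 0" by (simp add: linv_def)

lemma writhe_mirror: "writhe (mirror G) = - writhe G"
  by (simp add: writhe_def mirror_mf sum.reindex[OF inj_on_subset[OF inj_mf]] sum_negf)
lemma writhe_reverse: "writhe (reverse G) = writhe G"
  by (simp add: writhe_def reverse_rf sum.reindex[OF inj_on_subset[OF inj_rf]])

lemma tsubst_Finv:
  assumes resp: "\<And>p q. lequiv p q \<Longrightarrow> lequiv (f p) (f q)"
  shows "tsubst f (Finv G) = (\<Sum>c\<in>G. Poly_Mapping.single (lclass (f (gpoly G c))) (cw c))
            - Poly_Mapping.single (lclass (f 0)) (writhe G)"
  unfolding Finv_def tsubst_diff tsubst_sum by (simp add: tsubst_single[OF resp])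

theorem proposition5p2:
  assumes "gauss_wf G"
  shows "Finv (mirror G) = - tsubst (\<lambda>p. - linv p) (Finv G)
       \<and> Finv (reverse G) = tsubst (\<lambda>p. - p) (Finv G)"
proof
  have "Finv (mirror G) = (\<Sum>c\<in>G. Poly_Mapping.single (lclass (gpoly (mirror G) (mf c))) (- cw c))
            - Poly_Mapping.single (lclass 0) (- writhe G)"
    unfolding Finv_def writhe_mirror
    by (simp add: mirror_mf[of G] sum.reindex[OF inj_on_subset[OF inj_mf]] del: mirror_mf)
  also have "\<dots> = (\<Sum>c\<in>G. Poly_Mapping.single (lclass (- linv (gpoly G c))) (- cw c))
            - Poly_Mapping.single (lclass 0) (- writhe G)"
    using lclass_eq[OF gpoly_mirror] by simp
  also have "\<dots> = - tsubst (\<lambda>p. - linv p) (Finv G)"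
  proof -
    have T: "tsubst (\<lambda>p. - linv p) (Finv G) = (\<Sum>c\<in>G. Poly_Mapping.single (lclass (- linv (gpoly G c))) (cw c))
            - Poly_Mapping.single (lclass (- linv 0)) (writhe G)"
      by (rule tsubst_Finv) (rule resp_linv)
    show ?thesis unfolding T by (simp add: linv_zero single_uminus sum_negf)
  qed
  finally show "Finv (mirror G) = - tsubst (\<lambda>p. - linv p) (Finv G)" .
next
  have "Finv (reverse G) = (\<Sum>c\<in>G. Poly_Mapping.single (lclass (gpoly (reverse G) (rf c))) (cw c))
            - Poly_Mapping.single (lclass 0) (writhe G)"
    unfolding Finv_def writhe_reverse
    by (simp add: reverse_rf[of G] sum.reindex[OF inj_on_subset[OF inj_rf]] del: reverse_rf)
  also have "\<dots> = tsubst (\<lambda>p. - p) (Finv G)"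
  proof -
    have T: "tsubst (\<lambda>p. - p) (Finv G) = (\<Sum>c\<in>G. Poly_Mapping.single (lclass (- gpoly G c)) (cw c))
            - Poly_Mapping.single (lclass (- 0)) (writhe G)"
      by (rule tsubst_Finv) (rule resp_uminus)
    show ?thesis unfolding T gpoly_reverse by simp
  qed
  finally show "Finv (reverse G) = tsubst (\<lambda>p. - p) (Finv G)" .
qed

end
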